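(* Let $n\ge2$, $d,p,K\ge1$, $P_1,\dots,P_n\in\mathbb{R}^{d\times p}$, $G_{ij}=P_i^TP_j$, and define $G^A=\frac1n\sum_iG_{ii}$, $G^T=\frac1{n^2}\sum_i\sum_jG_{ij}$, $G^D=G^A-G^T$. Let $\xi_X,\xi_Y\in\mathbb{R}^{p\times K}$, $X_i=P_i\xi_X$, $Y_i=P_i\xi_Y\in\mathbb{R}^{d\times K}$, let $X,Y\in\mathbb{R}^{nd\times K}$ stack the $X_i$ (resp. $Y_i$) vertically, let $\bar X,\bar Y$ be the projections of the columns of $X,Y$ onto the consensus subspace $\mathcal{C}=\{(z_1,\dots,z_n):z_1=\dots=z_n\in\mathbb{R}^d\}$ (i.e. each block replaced by the agent average $\frac1n\sum_iX_i$, resp. $\frac1n\sum_iY_i$), and $X_\perp=X-\bar X$, $Y_\perp=Y-\bar Y$. Then, for $\lambda_-\le\lambda_+$, the constraints $\bar X=\bar Y$, $(Y_\perp-\lambda_-X_\perp)^T(Y_\perp-\lambda_+X_\perp)\preceq0$, $X_\perp^TY_\perp=Y_\perp^TX_\perp$ are respectively equivalent to $$(\xi_X-\xi_Y)^TG^T(\xi_X-\xi_Y)=0,\qquad(\xi_Y-\lambda_-\xi_X)^TG^D(\xi_Y-\lambda_+\xi_X)\preceq0,\qquad \xi_Y^TG^D\xi_X-\xi_X^TG^D\xi_Y=0,$$ which do not involve $n$. *)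

theory Defs
  imports "HOL-Analysis.Analysis"
begin

text \<open>Agents are indexed by a finite type 'n (n = CARD('n)); vectors in R^d, R^p and
  the K columns are indexed by finite types 'd, 'p, 'k. A stacked matrix in R^{nd x K}
  has rows indexed by 'n \<times> 'd (block i, row r).\<close>

definition gram :: "('n \<Rightarrow> real^'p^'d) \<Rightarrow> 'n \<Rightarrow> 'n \<Rightarrow> real^'p^'p::finite" where
  "gram P i j = transpose (P i) ** P j"

definition gram_avg :: "('n::finite \<Rightarrow> real^'p^'d) \<Rightarrow> real^'p^'p::finite" where
  "gram_avg P = (1 / real CARD('n)) *\<^sub>R (\<Sum>i\<in>UNIV. gram P i i)"

definition gram_tot :: "('n::finite \<Rightarrow> real^'p^'d) \<Rightarrow> real^'p^'p::finite" where
  "gram_tot P = (1 / (real CARD('n))^2) *\<^sub>R (\<Sum>i\<in>UNIV. \<Sum>j\<in>UNIV. gram P i j)"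

definition gram_dis :: "('n::finite \<Rightarrow> real^'p^'d) \<Rightarrow> real^'p^'p::finite" where
  "gram_dis P = gram_avg P - gram_tot P"

definition stack :: "('n::finite \<Rightarrow> real^'k^'d::finite) \<Rightarrow> real^'k^('n \<times> 'd)" where
  "stack Z = (\<chi> ir. Z (fst ir) $ snd ir)"

definition consensus_proj :: "('n::finite \<Rightarrow> real^'k^'d) \<Rightarrow> real^'k^('n \<times> 'd)" where
  "consensus_proj Z = (\<chi> ir. ((1 / real CARD('n)) *\<^sub>R (\<Sum>j\<in>UNIV. Z j)) $ snd ir)"

definition neg_semidef :: "real^'k^'k \<Rightarrow> bool" where
  "neg_semidef M \<longleftrightarrow> (\<forall>x. x \<bullet> (M *v x) \<le> 0)"

end

theory Submission
  imports Defs
begin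

lemma mm_comp: "((A::real^'m^'n) ** (B::real^'k^'m)) $ i $ j = (\<Sum>k\<in>UNIV. A$i$k * B$k$j)"
  by (simp add: matrix_matrix_mult_def)

lemma mm_sum_left: "(\<Sum>i\<in>S. (A i::real^'m^'n)) ** (B::real^'k^'m) = (\<Sum>i\<in>S. A i ** B)"
  by (simp add: vec_eq_iff mm_comp sum_distrib_right) (intro allI, rule sum.swap)

lemma mm_sum_right: "(B::real^'m^'n) ** (\<Sum>i\<in>S. (A i::real^'k^'m)) = (\<Sum>i\<in>S. B ** A i)"
  by (simp add: vec_eq_iff mm_comp sum_distrib_left) (intro allI, rule sum.swap)

lemma mm_scale_left: "(c *\<^sub>R (A::real^'m^'n)) ** (B::real^'k^'m) = c *\<^sub>R (A ** B)"
  by (simp add: vec_eq_iff mm_comp sum_distrib_left mult.assoc)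

lemma mm_scale_right: "(A::real^'m^'n) ** (c *\<^sub>R (B::real^'k^'m)) = c *\<^sub>R (A ** B)"
  by (simp add: vec_eq_iff mm_comp sum_distrib_left algebra_simps)

lemma mm_diff_left: "((A::real^'m^'n) - A') ** (B::real^'k^'m) = A ** B - A' ** B"
  by (simp add: vec_eq_iff mm_comp sum_subtractf algebra_simps)

lemma mm_diff_right: "(A::real^'m^'n) ** ((B::real^'k^'m) - B') = A ** B - A ** B'"
  by (simp add: vec_eq_iff mm_comp sum_subtractf algebra_simps)

lemma transpose_sum: "transpose (\<Sum>i\<in>S. (A i::real^'m^'n)) = (\<Sum>i\<in>S. transpose (A i))"
  by (simp add: vec_eq_iff transpose_def)

lemma transpose_diff: "transpose ((A::real^'m^'n) - B) = transpose A - transpose B"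
  by (simp add: vec_eq_iff transpose_def)

lemma stack_diff: "stack Z - stack W = stack (\<lambda>i. Z i - W i)"
  by (simp add: vec_eq_iff stack_def)

lemma stack_scale: "c *\<^sub>R stack Z = stack (\<lambda>i. c *\<^sub>R Z i)"
  by (simp add: vec_eq_iff stack_def)

lemma stack_gram: "transpose (stack (Z::'n::finite \<Rightarrow> real^'k^'d::finite)) ** stack (W::'n \<Rightarrow> real^'l^'d)
   = (\<Sum>i\<in>UNIV. transpose (Z i) ** W i)"
proof -
  have "(UNIV :: ('n \<times> 'd) set) = UNIV \<times> UNIV" by simp
  then show ?thesis
    by (simp add: vec_eq_iff mm_comp stack_def transpose_def sum.cartesian_product case_prod_beta)
qed

lemma stack_const_eq: "stack (\<lambda>i::'n::finite. A) = stack (\<lambda>i. B) \<longleftrightarrow> A = B"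
  by (auto simp: vec_eq_iff stack_def)

lemma gram_zero: "transpose (M::real^'k^'m) ** M = 0 \<longleftrightarrow> M = 0"
proof
  assume h: "transpose M ** M = 0"
  show "M = 0"
  proof (simp add: vec_eq_iff, intro allI)
    fix r c
    have "(\<Sum>k\<in>UNIV. M$k$c * M$k$c) = 0"
      using h by (simp add: vec_eq_iff mm_comp transpose_def)
    then have "\<forall>k\<in>UNIV. M$k$c * M$k$c = 0"
      by (subst sum_nonneg_eq_0_iff[symmetric]) auto
    then show "M$r$c = 0" by simp
  qed
qed simp

lemma nsd_scale: "(c::real) > 0 \<Longrightarrow> neg_semidef (c *\<^sub>R M) \<longleftrightarrow> neg_semidef M"
proof -
  assume c: "c > 0"
  have "(c *\<^sub>R M) *v x = c *\<^sub>R (M *v x)" for x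
    by (simp add: vec_eq_iff matrix_vector_mult_def sum_distrib_left mult.assoc)
  then show ?thesis using c
    by (simp add: neg_semidef_def mult_le_0_iff)
qed

definition pbar :: "('n::finite \<Rightarrow> real^'p^'d) \<Rightarrow> real^'p^'d" where
  "pbar P = (1 / real CARD('n)) *\<^sub>R (\<Sum>j\<in>UNIV. P j)"

lemma sumP: "(\<Sum>j\<in>UNIV. P j) = real CARD('n) *\<^sub>R pbar (P::'n::finite \<Rightarrow> real^'p^'d)"
  by (simp add: pbar_def)

lemma consensus_stack: "consensus_proj Z = stack (\<lambda>i. (1 / real CARD('n)) *\<^sub>R (\<Sum>j\<in>UNIV. Z j))"
  for Z :: "'n::finite \<Rightarrow> real^'k^'d::finite"
  by (simp add: vec_eq_iff stack_def consensus_proj_def)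

lemma consensus_P: "consensus_proj (\<lambda>i. P i ** A) = stack (\<lambda>i. pbar P ** A)"
  by (simp add: consensus_stack pbar_def mm_sum_left mm_scale_left)

lemma perp_eq: "stack (\<lambda>i. P i ** A) - consensus_proj (\<lambda>i. P i ** A) = stack (\<lambda>i. (P i - pbar P) ** A)"
  by (simp add: consensus_P stack_diff mm_diff_left)

lemma gram_tot_eq: "gram_tot P = transpose (pbar P) ** pbar P"
  by (simp add: gram_tot_def pbar_def gram_def transpose_scalar transpose_sum mm_scale_left
      mm_scale_right mm_sum_left mm_sum_right power2_eq_square)
     (subst sum.swap, simp add: scaleR_sum_right[symmetric])

lemma gram_dis_sum: "(\<Sum>i\<in>UNIV. transpose (P i - pbar P) ** (P i - pbar P))
   = real CARD('n) *\<^sub>R gram_dis (P::'n::finite \<Rightarrow> real^'p::finite^'d::finite)"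
proof -
  let ?m = "real CARD('n)"
  let ?B = "pbar P"
  have m: "?m \<noteq> 0" by simp
  have "(\<Sum>i\<in>UNIV. transpose (P i - ?B) ** (P i - ?B))
     = (\<Sum>i\<in>UNIV. transpose (P i) ** P i) - transpose (\<Sum>i\<in>UNIV. P i) ** ?B
       - (transpose ?B ** (\<Sum>i\<in>UNIV. P i) - ?m *\<^sub>R (transpose ?B ** ?B))"
    by (simp add: transpose_diff mm_diff_left mm_diff_right sum_subtractf transpose_sum
        mm_sum_left mm_sum_right sum_constant_scaleR del: sum_constant)
  also have "\<dots> = (\<Sum>i\<in>UNIV. transpose (P i) ** P i) - ?m *\<^sub>R (transpose ?B ** ?B)"
    unfolding sumP by (simp add: transpose_scalar mm_scale_left mm_scale_right)
  also have "\<dots> = ?m *\<^sub>R gram_dis P"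
    using m by (simp add: gram_dis_def gram_avg_def gram_tot_eq gram_def scaleR_diff_right)
  finally show ?thesis .
qed

lemma key: "transpose (stack (\<lambda>i. (P i - pbar P) ** A)) ** stack (\<lambda>i. (P i - pbar P) ** B)
   = real CARD('n) *\<^sub>R (transpose A ** gram_dis P ** B)"
  for P :: "'n::finite \<Rightarrow> real^'p::finite^'d::finite"
proof -
  have "transpose (stack (\<lambda>i. (P i - pbar P) ** A)) ** stack (\<lambda>i. (P i - pbar P) ** B)
     = (\<Sum>i\<in>UNIV. transpose A ** (transpose (P i - pbar P) ** (P i - pbar P)) ** B)"
    by (simp add: stack_gram matrix_transpose_mul matrix_mul_assoc)
  also have "\<dots> = transpose A ** (\<Sum>i\<in>UNIV. transpose (P i - pbar P) ** (P i - pbar P)) ** B"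
    by (simp add: mm_sum_left mm_sum_right)
  finally show ?thesis by (simp add: gram_dis_sum mm_scale_left mm_scale_right)
qed

theorem proposition9:
  fixes P :: "'n::finite \<Rightarrow> real^'p::finite^'d::finite"
    and \<xi>X \<xi>Y :: "real^'k::finite^'p"
    and lm lp :: real
  assumes "CARD('n) \<ge> 2"
    and "lm \<le> lp"
  defines "Xb \<equiv> (\<lambda>i. P i ** \<xi>X)" and "Yb \<equiv> (\<lambda>i. P i ** \<xi>Y)"
  defines "Xperp \<equiv> stack Xb - consensus_proj Xb"
    and "Yperp \<equiv> stack Yb - consensus_proj Yb"
  shows "(consensus_proj Xb = consensus_proj Yb \<longleftrightarrow>
            transpose (\<xi>X - \<xi>Y) ** gram_tot P ** (\<xi>X - \<xi>Y) = 0)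
       \<and> (neg_semidef (transpose (Yperp - lm *\<^sub>R Xperp) ** (Yperp - lp *\<^sub>R Xperp)) \<longleftrightarrow>
            neg_semidef (transpose (\<xi>Y - lm *\<^sub>R \<xi>X) ** gram_dis P ** (\<xi>Y - lp *\<^sub>R \<xi>X)))
       \<and> (transpose Xperp ** Yperp = transpose Yperp ** Xperp \<longleftrightarrow>
            transpose \<xi>Y ** gram_dis P ** \<xi>X - transpose \<xi>X ** gram_dis P ** \<xi>Y = 0)"
proof (intro conjI)
  let ?m = "real CARD('n)"
  have m: "?m > 0" by simp
  let ?D = "\<lambda>i. P i - pbar P"
  have Xp: "Xperp = stack (\<lambda>i. ?D i ** \<xi>X)" unfolding Xperp_def Xb_def by (rule perp_eq)
  have Yp: "Yperp = stack (\<lambda>i. ?D i ** \<xi>Y)" unfolding Yperp_def Yb_def by (rule perp_eq)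
  have lin: "Yperp - c *\<^sub>R Xperp = stack (\<lambda>i. ?D i ** (\<xi>Y - c *\<^sub>R \<xi>X))" for c
    unfolding Xp Yp by (simp add: stack_scale stack_diff mm_diff_right mm_scale_right)
  show "consensus_proj Xb = consensus_proj Yb \<longleftrightarrow>
            transpose (\<xi>X - \<xi>Y) ** gram_tot P ** (\<xi>X - \<xi>Y) = 0"
  proof -
    have "consensus_proj Xb = consensus_proj Yb \<longleftrightarrow> pbar P ** \<xi>X = pbar P ** \<xi>Y"
      unfolding Xb_def Yb_def consensus_P stack_const_eq ..
    also have "\<dots> \<longleftrightarrow> pbar P ** (\<xi>X - \<xi>Y) = 0" by (simp add: mm_diff_right)
    also have "\<dots> \<longleftrightarrow> transpose (pbar P ** (\<xi>X - \<xi>Y)) ** (pbar P ** (\<xi>X - \<xi>Y)) = 0"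
      by (rule gram_zero[symmetric])
    also have "transpose (pbar P ** (\<xi>X - \<xi>Y)) ** (pbar P ** (\<xi>X - \<xi>Y))
       = transpose (\<xi>X - \<xi>Y) ** gram_tot P ** (\<xi>X - \<xi>Y)"
      by (simp add: gram_tot_eq matrix_transpose_mul matrix_mul_assoc)
    finally show ?thesis .
  qed
  show "neg_semidef (transpose (Yperp - lm *\<^sub>R Xperp) ** (Yperp - lp *\<^sub>R Xperp)) \<longleftrightarrow>
            neg_semidef (transpose (\<xi>Y - lm *\<^sub>R \<xi>X) ** gram_dis P ** (\<xi>Y - lp *\<^sub>R \<xi>X))"
    unfolding lin key using nsd_scale[OF m] by blast
  show "transpose Xperp ** Yperp = transpose Yperp ** Xperp \<longleftrightarrow>
            transpose \<xi>Y ** gram_dis P ** \<xi>X - transpose \<xi>X ** gram_dis P ** \<xi>Y = 0"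
    unfolding Xp Yp key using m by auto
qed

end
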